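(* Let $I$ be a general ring and $e=e^2\in I$. Then $QN(eIe)=eIe\cap QN(I)$.
   Context: A general ring is an associative ring not necessarily having an identity; $eIe=\{eae\mid a\in I\}$ is a general ring under the operations of $I$. For a general ring $K$ and $p,q\in K$, $p*q=p+q-pq$; $Q(K)=\{q\in K\mid p*q=0=q*p\text{ for some }p\in K\}$; $\mathrm{comm}_K(q)=\{x\in K\mid xq=qx\}$; $QN(K)=\{q\in K\mid qx\in Q(K)\text{ for every }x\in\mathrm{comm}_K(q)\}$. *)

theory Defs
  imports Main
begin

text \<open>General rings (associative, not necessarily unital) are modelled by the
type class ring. Quasi-inverse notions are defined relative to a carrier K
(a subset closed under the ring operations, e.g. the corner ring eIe).\<close>

definition qcirc :: "'a::ring \<Rightarrow> 'a \<Rightarrow> 'a" where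
  "qcirc p q = p + q - p * q"

definition Qset :: "'a::ring set \<Rightarrow> 'a set" where
  "Qset K = {q \<in> K. \<exists>p\<in>K. qcirc p q = 0 \<and> qcirc q p = 0}"

definition comm_in :: "'a::ring set \<Rightarrow> 'a \<Rightarrow> 'a set" where
  "comm_in K q = {x \<in> K. x * q = q * x}"

definition QN :: "'a::ring set \<Rightarrow> 'a set" where
  "QN K = {q \<in> K. \<forall>x\<in>comm_in K q. q * x \<in> Qset K}"

definition corner :: "'a::ring \<Rightarrow> 'a set \<Rightarrow> 'a set" where
  "corner e I = {e * a * e | a. a \<in> I}"

end

theory Submission
  imports Defs
begin

lemma corner_iff:
  fixes e :: "'a::ring"
  assumes "e * e = e"
  shows "y \<in> corner e UNIV \<longleftrightarrow> e * y = y \<and> y * e = y"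
proof
  assume "y \<in> corner e UNIV"
  then obtain a where y: "y = e * a * e" by (auto simp: corner_def)
  have "e * y = (e * e) * a * e" by (simp add: y mult.assoc)
  moreover have "y * e = e * a * (e * e)" by (simp add: y mult.assoc)
  ultimately show "e * y = y \<and> y * e = y" using assms y by simp
next
  assume "e * y = y \<and> y * e = y"
  then have "y = e * y * e" by simp
  then show "y \<in> corner e UNIV" by (auto simp: corner_def)
qed

lemma Q_corner:
  fixes e :: "'a::ring"
  assumes "e * e = e"
  shows "Qset (corner e UNIV) = corner e UNIV \<inter> Qset UNIV"
proof
  show "Qset (corner e UNIV) \<subseteq> corner e UNIV \<inter> Qset UNIV"
    by (auto simp: Qset_def)
next
  show "corner e UNIV \<inter> Qset UNIV \<subseteq> Qset (corner e UNIV)"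
  proof
    fix q assume "q \<in> corner e UNIV \<inter> Qset UNIV"
    then have qc: "e * q = q" "q * e = q" and "\<exists>p. qcirc p q = 0 \<and> qcirc q p = 0"
      using corner_iff[OF assms] by (auto simp: Qset_def)
    then obtain p where h1: "p + q - p * q = 0" and h2: "q + p - q * p = 0"
      by (auto simp: qcirc_def)
    have p1: "p = p * q - q" using h1 by (simp add: algebra_simps)
    have p2: "p = q * p - q" using h2 by (simp add: algebra_simps)
    have "p * e = p * q * e - q * e" by (subst p1) (simp add: algebra_simps)
    also have "\<dots> = p" using qc p1 by (simp add: mult.assoc)
    finally have pe: "p * e = p" .
    have "e * p = e * q * p - e * q" by (subst p2) (simp add: algebra_simps mult.assoc)
    also have "\<dots> = p" using qc p2 by simp
    finally have ep: "e * p = p" .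
    have "p \<in> corner e UNIV" using corner_iff[OF assms] pe ep by simp
    moreover have "q \<in> corner e UNIV" using corner_iff[OF assms] qc by simp
    ultimately show "q \<in> Qset (corner e UNIV)" using h1 h2
      by (auto simp: Qset_def qcirc_def)
  qed
qed

theorem lemma3p4:
  fixes e :: "'a::ring"
  assumes "e * e = e"
  shows "QN (corner e UNIV) = corner e UNIV \<inter> QN UNIV"
proof
  show "QN (corner e UNIV) \<subseteq> corner e UNIV \<inter> QN UNIV"
  proof
    fix q assume q: "q \<in> QN (corner e UNIV)"
    then have qC: "q \<in> corner e UNIV" by (simp add: QN_def)
    then have qc: "e * q = q" "q * e = q" using corner_iff[OF assms] by auto
    have "q \<in> QN UNIV"
      unfolding QN_def
    proof (intro CollectI conjI ballI UNIV_I)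
      fix x assume "x \<in> comm_in UNIV q"
      then have xq: "x * q = q * x" by (simp add: comm_in_def)
      define y where "y = e * x * e"
      have yC: "y \<in> corner e UNIV" by (auto simp: corner_def y_def)
      have "y * q = e * x * (e * q)" by (simp add: y_def mult.assoc)
      also have "\<dots> = e * (x * q)" using qc by (simp add: mult.assoc)
      also have "\<dots> = (e * q) * x" using xq by (simp add: mult.assoc)
      finally have yq: "y * q = q * x" using qc by simp
      have "q * y = (q * e) * x * e" by (simp add: y_def mult.assoc)
      also have "\<dots> = (x * q) * e" using qc xq by simp
      also have "\<dots> = x * (q * e)" by (simp add: mult.assoc)
      also have "\<dots> = q * x" using qc xq by simp
      finally have qy: "q * y = q * x" .
      have "y \<in> comm_in (corner e UNIV) q" using yC yq qy by (simp add: comm_in_def)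
      then have "q * y \<in> Qset (corner e UNIV)" using q by (simp add: QN_def)
      then show "q * x \<in> Qset UNIV" using qy Q_corner[OF assms] by auto
    qed
    then show "q \<in> corner e UNIV \<inter> QN UNIV" using qC by simp
  qed
next
  show "corner e UNIV \<inter> QN UNIV \<subseteq> QN (corner e UNIV)"
  proof
    fix q assume q: "q \<in> corner e UNIV \<inter> QN UNIV"
    have "\<forall>x\<in>comm_in (corner e UNIV) q. q * x \<in> Qset (corner e UNIV)"
    proof
      fix x assume x: "x \<in> comm_in (corner e UNIV) q"
      then have xC: "x \<in> corner e UNIV" and "x \<in> comm_in UNIV q"
        by (auto simp: comm_in_def)
      then have "q * x \<in> Qset UNIV" using q by (auto simp: QN_def)
      moreover have "q * x \<in> corner e UNIV"
      proof -
        have a: "e * q = q" using q corner_iff[OF assms] by auto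
        have b: "x * e = x" using xC corner_iff[OF assms] by auto
        have "e * (q * x) = (e * q) * x" by (simp add: mult.assoc)
        then have c: "e * (q * x) = q * x" using a by simp
        have "(q * x) * e = q * (x * e)" by (simp add: mult.assoc)
        then have d: "(q * x) * e = q * x" using b by simp
        show ?thesis using c d corner_iff[OF assms] by simp
      qed
      ultimately show "q * x \<in> Qset (corner e UNIV)" using Q_corner[OF assms] by auto
    qed
    then show "q \<in> QN (corner e UNIV)" using q by (simp add: QN_def)
  qed
qed

end
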